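(* Let $G$ be a connected graph and let $v\in V(G)$ be a cut-vertex such that either (1) $G-v$ has at least three connected components, or (2) $G-v$ has two connected components $G_1,G_2$ such that, for both $i=1,2$, the induced subgraph $G[V(G_i)\cup\{v\}]$ is not isomorphic to a path. Then $v$ is a void vertex of $G$.
   Context: All graphs are finite and simple. For vertices $u,v$ of a connected graph $G$, $d(u,v)$ is the length of a shortest $u$–$v$ path. A set $R\subseteq V(G)$ is a resolving set if for all distinct $x,y\in V(G)$ there is $r\in R$ with $d(r,x)\neq d(r,y)$. The metric dimension $\dim(G)$ is the minimum cardinality of a resolving set, and a resolving set of cardinality $\dim(G)$ is a metric basis. A vertex is a void vertex if it belongs to no metric basis of $G$. A cut-vertex is a vertex $v$ such that $G-v$ is disconnected; $G[S]$ denotes the subgraph induced by $S$. *)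

theory Defs
  imports Main
begin

definition simple_graph :: "'a set \<Rightarrow> ('a \<Rightarrow> 'a \<Rightarrow> bool) \<Rightarrow> bool" where
  "simple_graph V E \<longleftrightarrow> finite V \<and> V \<noteq> {} \<and>
     (\<forall>x y. E x y \<longrightarrow> x \<in> V \<and> y \<in> V) \<and>
     (\<forall>x y. E x y \<longrightarrow> E y x) \<and> (\<forall>x. \<not> E x x)"

definition walk_in :: "'a set \<Rightarrow> ('a \<Rightarrow> 'a \<Rightarrow> bool) \<Rightarrow> 'a \<Rightarrow> 'a \<Rightarrow> nat \<Rightarrow> bool" where
  "walk_in S E x y n \<longleftrightarrow> (\<exists>p :: nat \<Rightarrow> 'a. p 0 = x \<and> p n = y \<and>
      (\<forall>i\<le>n. p i \<in> S) \<and> (\<forall>i<n. E (p i) (p (Suc i))))"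

definition reachable_in :: "'a set \<Rightarrow> ('a \<Rightarrow> 'a \<Rightarrow> bool) \<Rightarrow> 'a \<Rightarrow> 'a \<Rightarrow> bool" where
  "reachable_in S E x y \<longleftrightarrow> (\<exists>n. walk_in S E x y n)"

definition connected_graph :: "'a set \<Rightarrow> ('a \<Rightarrow> 'a \<Rightarrow> bool) \<Rightarrow> bool" where
  "connected_graph V E \<longleftrightarrow> simple_graph V E \<and> (\<forall>x\<in>V. \<forall>y\<in>V. reachable_in V E x y)"

definition dist :: "'a set \<Rightarrow> ('a \<Rightarrow> 'a \<Rightarrow> bool) \<Rightarrow> 'a \<Rightarrow> 'a \<Rightarrow> nat" where
  "dist V E x y = (LEAST n. walk_in V E x y n)"

definition resolving_set :: "'a set \<Rightarrow> ('a \<Rightarrow> 'a \<Rightarrow> bool) \<Rightarrow> 'a set \<Rightarrow> bool" where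
  "resolving_set V E R \<longleftrightarrow> R \<subseteq> V \<and>
     (\<forall>x\<in>V. \<forall>y\<in>V. x \<noteq> y \<longrightarrow> (\<exists>r\<in>R. dist V E r x \<noteq> dist V E r y))"

definition metric_dim :: "'a set \<Rightarrow> ('a \<Rightarrow> 'a \<Rightarrow> bool) \<Rightarrow> nat" where
  "metric_dim V E = (LEAST k. \<exists>R. resolving_set V E R \<and> card R = k)"

definition metric_basis :: "'a set \<Rightarrow> ('a \<Rightarrow> 'a \<Rightarrow> bool) \<Rightarrow> 'a set \<Rightarrow> bool" where
  "metric_basis V E R \<longleftrightarrow> resolving_set V E R \<and> card R = metric_dim V E"

definition void_vertex :: "'a set \<Rightarrow> ('a \<Rightarrow> 'a \<Rightarrow> bool) \<Rightarrow> 'a \<Rightarrow> bool" where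
  "void_vertex V E v \<longleftrightarrow> v \<in> V \<and> (\<forall>R. metric_basis V E R \<longrightarrow> v \<notin> R)"

definition components_minus :: "'a set \<Rightarrow> ('a \<Rightarrow> 'a \<Rightarrow> bool) \<Rightarrow> 'a \<Rightarrow> 'a set set" where
  "components_minus V E v =
     {C. \<exists>x \<in> V - {v}. C = {y. reachable_in (V - {v}) E x y}}"

definition cut_vertex :: "'a set \<Rightarrow> ('a \<Rightarrow> 'a \<Rightarrow> bool) \<Rightarrow> 'a \<Rightarrow> bool" where
  "cut_vertex V E v \<longleftrightarrow> v \<in> V \<and> card (components_minus V E v) \<ge> 2"

definition induced_is_path :: "('a \<Rightarrow> 'a \<Rightarrow> bool) \<Rightarrow> 'a set \<Rightarrow> bool" where
  "induced_is_path E S \<longleftrightarrow> (\<exists>n f. n \<ge> 1 \<and> bij_betw f {0..<n} S \<and>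
      (\<forall>i<n. \<forall>j<n. E (f i) (f j) \<longleftrightarrow> (i = Suc j \<or> j = Suc i)))"

end

theory Submission
  imports Defs
begin

lemma walk_refl: "x \<in> S \<Longrightarrow> walk_in S E x x 0"
  unfolding walk_in_def by (rule exI[of _ "\<lambda>_. x"]) auto

lemma walk_edge: "E x y \<Longrightarrow> x \<in> S \<Longrightarrow> y \<in> S \<Longrightarrow> walk_in S E x y 1"
  unfolding walk_in_def by (rule exI[of _ "\<lambda>i. if i = 0 then x else y"]) auto

lemma walk_ends: "walk_in S E x y n \<Longrightarrow> x \<in> S \<and> y \<in> S"
  unfolding walk_in_def by force

lemma walk_sub:
  assumes "\<forall>i\<le>n. p i \<in> S" "\<forall>i<n. E (p i) (p (Suc i))" "a \<le> b" "b \<le> n"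
  shows "walk_in S E (p a) (p b) (b - a)"
  unfolding walk_in_def
  by (rule exI[of _ "\<lambda>k. p (a + k)"]) (use assms in auto)

lemma walk_append:
  assumes "walk_in S E x y m" "walk_in S E y z n"
  shows "walk_in S E x z (m + n)"
proof -
  obtain p where p: "p 0 = x" "p m = y" "\<forall>i\<le>m. p i \<in> S" "\<forall>i<m. E (p i) (p (Suc i))"
    using assms(1) unfolding walk_in_def by blast
  obtain q where q: "q 0 = y" "q n = z" "\<forall>i\<le>n. q i \<in> S" "\<forall>i<n. E (q i) (q (Suc i))"
    using assms(2) unfolding walk_in_def by blast
  show ?thesis unfolding walk_in_def
  proof (rule exI[of _ "\<lambda>i. if i \<le> m then p i else q (i - m)"], intro conjI allI impI)
    fix i assume "i < m + n"
    show "E (if i \<le> m then p i else q (i - m)) (if Suc i \<le> m then p (Suc i) else q (Suc i - m))"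
    proof (cases "i < m")
      case True then show ?thesis using p by auto
    next
      case False
      then have "i - m < n" "Suc i - m = Suc (i - m)" using \<open>i < m + n\<close> by auto
      then show ?thesis using q p False by (cases "i = m") auto
    qed
  qed (use p q in auto)
qed

lemma walk_rev:
  assumes "\<forall>a b. E a b \<longrightarrow> E b a" "walk_in S E x y n"
  shows "walk_in S E y x n"
proof -
  obtain p where p: "p 0 = x" "p n = y" "\<forall>i\<le>n. p i \<in> S" "\<forall>i<n. E (p i) (p (Suc i))"
    using assms(2) unfolding walk_in_def by blast
  show ?thesis unfolding walk_in_def
  proof (rule exI[of _ "\<lambda>i. p (n - i)"], intro conjI allI impI)
    fix i assume "i < n"
    then have "E (p (n - Suc i)) (p (Suc (n - Suc i)))" using p by auto
    moreover have "Suc (n - Suc i) = n - i" using \<open>i < n\<close> by auto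
    ultimately show "E (p (n - i)) (p (n - Suc i))" using assms(1) by metis
  qed (use p in auto)
qed

lemma reach_sym: "\<forall>a b. E a b \<longrightarrow> E b a \<Longrightarrow> reachable_in S E x y \<Longrightarrow> reachable_in S E y x"
  unfolding reachable_in_def by (meson walk_rev)

lemma reach_trans: "reachable_in S E x y \<Longrightarrow> reachable_in S E y z \<Longrightarrow> reachable_in S E x z"
  unfolding reachable_in_def by (meson walk_append)

locale cg =
  fixes V :: "'a set" and E :: "'a \<Rightarrow> 'a \<Rightarrow> bool"
  assumes conn: "connected_graph V E"
begin

lemma fin: "finite V" and symE: "\<forall>a b. E a b \<longrightarrow> E b a" and irr: "\<And>x. \<not> E x x"
  and EV: "\<And>x y. E x y \<Longrightarrow> x \<in> V \<and> y \<in> V"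
  and reach: "\<And>x y. x \<in> V \<Longrightarrow> y \<in> V \<Longrightarrow> reachable_in V E x y"
  using conn unfolding connected_graph_def simple_graph_def by auto

lemma dist_le: "walk_in V E x y n \<Longrightarrow> dist V E x y \<le> n"
  unfolding dist_def by (rule Least_le)

lemma dist_walk: "x \<in> V \<Longrightarrow> y \<in> V \<Longrightarrow> walk_in V E x y (dist V E x y)"
  unfolding dist_def using reach[of x y] unfolding reachable_in_def by (metis LeastI)

lemma dist_self: "x \<in> V \<Longrightarrow> dist V E x x = 0"
  using dist_le[OF walk_refl] by fastforce

lemma dist_eq0: "x \<in> V \<Longrightarrow> y \<in> V \<Longrightarrow> dist V E x y = 0 \<Longrightarrow> x = y"
  using dist_walk[of x y] unfolding walk_in_def by auto

lemma dist_sym: "x \<in> V \<Longrightarrow> y \<in> V \<Longrightarrow> dist V E x y = dist V E y x"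
  using dist_le[OF walk_rev[OF symE dist_walk[of x y]]] dist_le[OF walk_rev[OF symE dist_walk[of y x]]]
  by auto

lemma dist_tri: "x \<in> V \<Longrightarrow> y \<in> V \<Longrightarrow> z \<in> V \<Longrightarrow> dist V E x z \<le> dist V E x y + dist V E y z"
  using dist_le[OF walk_append[OF dist_walk[of x y] dist_walk[of y z]]] by auto

lemma dist_edge: "E x y \<Longrightarrow> dist V E x y \<le> 1"
  using dist_le[OF walk_edge[of E x y V]] EV by auto

lemma dist_adj: "x \<in> V \<Longrightarrow> E a b \<Longrightarrow> dist V E x b \<le> dist V E x a + 1"
  using dist_tri[of x a b] dist_edge[of a b] EV[of a b] by auto

lemma dist_pred:
  assumes "x \<in> V" "z \<in> V" "dist V E x z = Suc m"
  shows "\<exists>w. E w z \<and> w \<in> V \<and> dist V E x w = m"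
proof -
  have "walk_in V E x z (Suc m)" using dist_walk[OF assms(1,2)] assms(3) by simp
  then obtain p where p: "p 0 = x" "p (Suc m) = z" "\<forall>i\<le>Suc m. p i \<in> V" "\<forall>i<Suc m. E (p i) (p (Suc i))"
    unfolding walk_in_def by blast
  have w: "walk_in V E x (p m) m" using walk_sub[of "Suc m" p V E 0 m] p(1,3,4) by simp
  have e: "E (p m) z" using p(2,4) by auto
  have pm: "p m \<in> V" using p(3) by simp
  have "dist V E x (p m) \<le> m" using dist_le[OF w] .
  moreover have "dist V E x z \<le> dist V E x (p m) + 1" using dist_adj[OF assms(1) e] .
  ultimately have "dist V E x (p m) = m" using assms(3) by linarith
  then show ?thesis using e pm by blast
qed

end

locale cgv = cg +
  fixes v assumes vV: "v \<in> V"
begin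

abbreviation "K \<equiv> components_minus V E v"
abbreviation comp :: "'a \<Rightarrow> 'a set" where "comp z \<equiv> {y. reachable_in (V - {v}) E z y}"

lemma comp_sub: assumes "C \<in> K" shows "C \<subseteq> V - {v}"
proof
  fix y assume "y \<in> C"
  obtain x where x: "x \<in> V - {v}" "C = comp x" using assms unfolding components_minus_def by blast
  then obtain n where "walk_in (V - {v}) E x y n" using \<open>y \<in> C\<close> unfolding reachable_in_def by blast
  then show "y \<in> V - {v}" using walk_ends by metis
qed

lemma comp_of: assumes "z \<in> V - {v}" shows "z \<in> comp z \<and> comp z \<in> K"
proof
  have "walk_in (V - {v}) E z z 0" using walk_refl[OF assms] .
  then show "z \<in> comp z" unfolding reachable_in_def by blast
  show "comp z \<in> K" unfolding components_minus_def using assms by blast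
qed

lemma comp_eq: assumes "C \<in> K" "z \<in> C" shows "C = comp z"
proof -
  obtain x where x: "x \<in> V - {v}" "C = comp x" using assms(1) unfolding components_minus_def by blast
  have xz: "reachable_in (V - {v}) E x z" using assms(2) x by simp
  have zx: "reachable_in (V - {v}) E z x" using reach_sym[OF symE xz] .
  show ?thesis unfolding x(2)
    using reach_trans[OF xz] reach_trans[OF zx] by blast
qed

lemma comp_disj: "C \<in> K \<Longrightarrow> C' \<in> K \<Longrightarrow> z \<in> C \<Longrightarrow> z \<in> C' \<Longrightarrow> C = C'"
  using comp_eq by metis

lemma comp_closed:
  assumes "C \<in> K" "z \<in> C" "E z w" "w \<in> V" "w \<noteq> v"
  shows "w \<in> C"
proof -
  have "z \<in> V - {v}" using comp_sub assms by blast
  then have "walk_in (V - {v}) E z w 1" using walk_edge[of E z w] assms by simp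
  then have "reachable_in (V - {v}) E z w" unfolding reachable_in_def by blast
  then show ?thesis using comp_eq[OF assms(1,2)] by blast
qed

lemma sep:
  assumes "C \<in> K" "r \<in> C" "y \<in> V" "y \<notin> C"
  shows "dist V E r y = dist V E r v + dist V E v y"
proof -
  have rV: "r \<in> V" using comp_sub assms by blast
  obtain p where p: "p 0 = r" "p (dist V E r y) = y" "\<forall>i\<le>dist V E r y. p i \<in> V"
      "\<forall>i<dist V E r y. E (p i) (p (Suc i))"
    using dist_walk[OF rV assms(3)] unfolding walk_in_def by blast
  define n where "n = dist V E r y"
  have ex: "\<exists>i. p i \<notin> C" using p(2) assms(4) by (intro exI[of _ "dist V E r y"]) simp
  define i where "i = (LEAST i. p i \<notin> C)"
  have pi: "p i \<notin> C" unfolding i_def using ex by (rule LeastI_ex)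
  have ile: "i \<le> n" unfolding i_def n_def using p(2) assms(4) by (simp add: Least_le)
  have i0: "i \<noteq> 0"
  proof
    assume "i = 0" then show False using pi p(1) assms(2) by simp
  qed
  have before: "p (i - 1) \<in> C" unfolding i_def
    using not_less_Least[of "i - 1" "\<lambda>i. p i \<notin> C"] i0 i_def by auto
  have e: "E (p (i - 1)) (p i)" using p(4) i0 ile n_def
    by (metis One_nat_def Suc_pred bot_nat_0.not_eq_extremum diff_less less_le_trans zero_less_one)
  have "p i \<in> V" using p(3) ile n_def by simp
  then have piv: "p i = v" using comp_closed[OF assms(1) before e] pi by blast
  have w1: "walk_in V E r v i" using walk_sub[of n p V E 0 i] p ile piv n_def by simp
  have w2: "walk_in V E v y (n - i)" using walk_sub[of n p V E i n] p ile piv n_def by simp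
  have "dist V E r v + dist V E v y \<le> n" using dist_le[OF w1] dist_le[OF w2] ile by linarith
  moreover have "dist V E r y \<le> dist V E r v + dist V E v y" using dist_tri[OF rV vV assms(3)] .
  ultimately show ?thesis unfolding n_def by linarith
qed

lemma nbr:
  assumes "C \<in> K" shows "\<exists>a\<in>C. dist V E v a = 1"
proof -
  obtain x where x: "x \<in> V - {v}" "C = comp x" using assms(1) unfolding components_minus_def by blast
  have "x \<in> C" using comp_of x by blast
  then have "\<exists>d. \<exists>a\<in>C. dist V E v a = d" by blast
  then obtain d where d: "\<exists>a\<in>C. dist V E v a = d" and dmin: "\<And>d'. d' < d \<Longrightarrow> \<not>(\<exists>a\<in>C. dist V E v a = d')"
    using ex_has_least_nat[of "\<lambda>d. \<exists>a\<in>C. dist V E v a = d" _ "\<lambda>d. d"] by (metis not_less)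
  obtain a where a: "a \<in> C" "dist V E v a = d" using d by blast
  have aV: "a \<in> V" "a \<noteq> v" using comp_sub[OF assms] a by auto
  have "d \<noteq> 0" using dist_eq0[OF vV aV(1)] a aV by auto
  then obtain m where m: "d = Suc m" by (cases d) auto
  obtain w where w: "E w a" "w \<in> V" "dist V E v w = m" using dist_pred[OF vV aV(1)] a m by blast
  have "w = v"
  proof (rule ccontr)
    assume "w \<noteq> v"
    then have "w \<in> C" using comp_closed[OF assms a(1), of w] w symE by blast
    then show False using dmin[of m] m w by auto
  qed
  then have "m = 0" using w dist_self[OF vV] by simp
  then show ?thesis using a m by auto
qed


lemma pred_in:
  assumes "C \<in> K" "z \<in> C \<union> {v}" "dist V E v z = Suc m"
  shows "\<exists>w \<in> C \<union> {v}. E w z \<and> dist V E v w = m"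
proof -
  have zv: "z \<noteq> v" using assms(3) dist_self[OF vV] by auto
  then have zC: "z \<in> C" using assms(2) by blast
  have zV: "z \<in> V" using comp_sub[OF assms(1)] zC by blast
  obtain w where w: "E w z" "w \<in> V" "dist V E v w = m" using dist_pred[OF vV zV assms(3)] by blast
  have "w \<in> C \<union> {v}"
  proof (cases "w = v")
    case False
    then show ?thesis using comp_closed[OF assms(1) zC, of w] w symE by blast
  qed simp
  then show ?thesis using w by blast
qed

lemma down:
  assumes "C \<in> K" "m \<in> dist V E v ` (C \<union> {v})" "k \<le> m"
  shows "k \<in> dist V E v ` (C \<union> {v})"
  using assms(2,3)
proof (induction m)
  case 0
  then have "k = 0" by simp
  then show ?case using "0.prems"(1) by simp
next
  case (Suc m)
  show ?case
  proof (cases "k = Suc m")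
    case True then show ?thesis using Suc.prems(1) by simp
  next
    case False
    then have km: "k \<le> m" using Suc.prems(2) by simp
    obtain z where z: "z \<in> C \<union> {v}" "dist V E v z = Suc m" using Suc.prems(1) by (metis imageE)
    obtain w where "w \<in> C \<union> {v}" "dist V E v w = m" using pred_in[OF assms(1) z] by blast
    then have "m \<in> dist V E v ` (C \<union> {v})" by (simp only: image_iff) metis
    then show ?thesis using Suc.IH km by simp
  qed
qed

lemma path_of:
  assumes C: "C \<in> K" and inj: "inj_on (dist V E v) (C \<union> {v})"
  shows "induced_is_path E (C \<union> {v})"
proof -
  define S where "S = C \<union> {v}"
  define d where "d = dist V E v"
  define D where "D = d ` S"
  define n where "n = card S"
  have finS: "finite S" unfolding S_def using comp_sub[OF C] fin vV finite_subset by blast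
  have cardD: "card D = n" unfolding D_def n_def using card_image inj S_def d_def by blast
  have finD: "finite D" unfolding D_def using finS by simp
  have Dsub: "D \<subseteq> {0..<n}"
  proof
    fix m assume m: "m \<in> D"
    have "{0..m} \<subseteq> D"
    proof
      fix k assume "k \<in> {0..m}"
      then have "k \<le> m" by simp
      then show "k \<in> D" using down[OF C, of m k] m unfolding D_def S_def d_def by blast
    qed
    then have "card {0..m} \<le> card D" using finD card_mono by blast
    then show "m \<in> {0..<n}" using cardD by simp
  qed
  have DD: "D = {0..<n}" using card_subset_eq[of "{0..<n}" D] Dsub cardD by simp
  define f where "f = inv_into S d"
  have bd: "bij_betw d S D" unfolding D_def using inj S_def d_def by (simp add: bij_betw_imageI)
  have bf: "bij_betw f {0..<n} S" unfolding f_def using bij_betw_inv_into[OF bd] DD by simp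
  have fS: "\<And>i. i < n \<Longrightarrow> f i \<in> S" using bf unfolding bij_betw_def by auto
  have df: "\<And>i. i < n \<Longrightarrow> d (f i) = i" unfolding f_def using DD D_def
    by (metis atLeastLessThan_iff f_inv_into_f zero_le)
  have fd: "\<And>z. z \<in> S \<Longrightarrow> f (d z) = z" unfolding f_def using inj S_def d_def
    by (simp add: inv_into_f_f)
  have n1: "n \<ge> 1" unfolding n_def using finS S_def by (simp add: Suc_leI card_gt_0_iff)
  have edge: "E (f i) (f j) \<longleftrightarrow> (i = Suc j \<or> j = Suc i)" if ij: "i < n" "j < n" for i j
  proof
    assume e: "E (f i) (f j)"
    have "f i \<in> V" "f j \<in> V" using EV[OF e] by auto
    have "j \<le> i + 1" using dist_adj[OF vV e] df ij unfolding d_def by simp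
    moreover have "i \<le> j + 1" using dist_adj[OF vV, of "f j" "f i"] e symE df ij unfolding d_def by simp
    moreover have "i \<noteq> j" using e irr by auto
    ultimately show "i = Suc j \<or> j = Suc i" by linarith
  next
    assume "i = Suc j \<or> j = Suc i"
    then show "E (f i) (f j)"
    proof
      assume h: "i = Suc j"
      obtain w where w: "w \<in> S" "E w (f i)" "d w = j"
        using pred_in[OF C, of "f i" j] fS[OF ij(1)] df[OF ij(1)] h unfolding S_def d_def by blast
      have "w = f j" using fd[OF w(1)] w(3) by simp
      then show ?thesis using w(2) symE by blast
    next
      assume h: "j = Suc i"
      obtain w where w: "w \<in> S" "E w (f j)" "d w = i"
        using pred_in[OF C, of "f j" i] fS[OF ij(2)] df[OF ij(2)] h unfolding S_def d_def by blast
      have "w = f i" using fd[OF w(1)] w(3) by simp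
      then show ?thesis using w(2) by blast
    qed
  qed
  show ?thesis unfolding induced_is_path_def
    using n1 bf edge unfolding S_def by blast
qed

end

lemma two_elems: assumes "2 \<le> card A" shows "\<exists>a b. a \<in> A \<and> b \<in> A \<and> a \<noteq> b"
proof -
  obtain a B where "A = insert a B" "a \<notin> B" "1 \<le> card B" "finite A"
    using assms card_le_Suc_iff[of 1 A] by auto
  moreover obtain b B' where "B = insert b B'"
    using \<open>1 \<le> card B\<close> card_le_Suc_iff[of 0 B] by auto
  ultimately show ?thesis by blast
qed

theorem theorem1:
  fixes V :: "'a set" and E :: "'a \<Rightarrow> 'a \<Rightarrow> bool" and v :: 'a
  assumes "connected_graph V E"
    and "cut_vertex V E v"
    and "card (components_minus V E v) \<ge> 3 \<or>
         (\<exists>C1 C2. components_minus V E v = {C1, C2} \<and> C1 \<noteq> C2 \<and>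
            \<not> induced_is_path E (C1 \<union> {v}) \<and> \<not> induced_is_path E (C2 \<union> {v}))"
  shows "void_vertex V E v"
proof -
  have vV: "v \<in> V" using assms(2) unfolding cut_vertex_def by blast
  interpret cgv V E v using assms(1) vV by (unfold_locales) auto
  have "v \<notin> R" if mb: "metric_basis V E R" for R
  proof
    assume vR: "v \<in> R"
    have res: "resolving_set V E R" and cardR: "card R = metric_dim V E"
      using mb unfolding metric_basis_def by auto
    have RV: "R \<subseteq> V" using res unfolding resolving_set_def by blast
    have resR: "\<And>x y. x \<in> V \<Longrightarrow> y \<in> V \<Longrightarrow> x \<noteq> y \<Longrightarrow> \<exists>r\<in>R. dist V E r x \<noteq> dist V E r y"
      using res unfolding resolving_set_def by blast
    have cover: "\<exists>r'\<in>R - {v}. r' \<notin> comp y" if yV: "y \<in> V - {v}" for y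
    proof (rule ccontr)
      assume "\<not> (\<exists>r'\<in>R - {v}. r' \<notin> comp y)"
      then have Rin: "\<And>r. r \<in> R \<Longrightarrow> r \<noteq> v \<Longrightarrow> r \<in> comp y" by blast
      have yC: "y \<in> comp y" and CyK: "comp y \<in> K" using comp_of[OF yV] by auto
      show False using assms(3)
      proof
        assume c3: "card K \<ge> 3"
        have finK: "finite K" using c3 card.infinite by fastforce
        have "card (K - {comp y}) \<ge> 2" using c3 finK CyK by (simp add: card_Diff_singleton)
        then obtain Ca Cb where Cab: "Ca \<in> K - {comp y}" "Cb \<in> K - {comp y}" "Ca \<noteq> Cb"
          using two_elems by blast
        obtain a where a: "a \<in> Ca" "dist V E v a = 1" using nbr Cab by blast
        obtain b where b: "b \<in> Cb" "dist V E v b = 1" using nbr Cab by blast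
        have aV: "a \<in> V" using a comp_sub Cab by blast
        have bV: "b \<in> V" using b comp_sub Cab by blast
        have ay: "a \<notin> comp y" using comp_disj[of Ca "comp y" a] a Cab CyK by blast
        have by': "b \<notin> comp y" using comp_disj[of Cb "comp y" b] b Cab CyK by blast
        have ab: "a \<noteq> b" using comp_disj[of Ca Cb a] a b Cab by blast
        obtain r where r: "r \<in> R" "dist V E r a \<noteq> dist V E r b" using resR[OF aV bV ab] by blast
        show False
        proof (cases "r = v")
          case True then show False using r a b by simp
        next
          case False
          then have "r \<in> comp y" using Rin r by blast
          then show False using sep[OF CyK _ aV ay] sep[OF CyK _ bV by'] r a b by simp
        qed
      next
        assume "\<exists>C1 C2. K = {C1, C2} \<and> C1 \<noteq> C2 \<and>
            \<not> induced_is_path E (C1 \<union> {v}) \<and> \<not> induced_is_path E (C2 \<union> {v})"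
        then obtain C where CK: "C \<in> K" and Cy: "C \<noteq> comp y" and np: "\<not> induced_is_path E (C \<union> {v})"
          using CyK by blast
        have decomp: "dist V E r z = dist V E r v + dist V E v z" if "r \<in> R" "z \<in> C \<union> {v}" for r z
        proof (cases "r = v")
          case True then show ?thesis using dist_self[OF vV] by simp
        next
          case False
          then have rC: "r \<in> comp y" using Rin that by blast
          have zV: "z \<in> V" using that(2) comp_sub[OF CK] vV by blast
          have "z \<notin> comp y"
          proof
            assume zy: "z \<in> comp y"
            then have "z \<noteq> v" using comp_sub[OF CyK] by blast
            then have "z \<in> C" using that(2) by blast
            then show False using comp_disj[OF CK CyK _ zy] Cy by blast
          qed
          then show ?thesis using sep[OF CyK rC zV] by simp
        qed
        have "inj_on (dist V E v) (C \<union> {v})"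
        proof (rule inj_onI, rule ccontr)
          fix z1 z2 assume z: "z1 \<in> C \<union> {v}" "z2 \<in> C \<union> {v}" "dist V E v z1 = dist V E v z2" "z1 \<noteq> z2"
          have "z1 \<in> V" "z2 \<in> V" using z comp_sub[OF CK] vV by blast+
          then obtain r where r: "r \<in> R" "dist V E r z1 \<noteq> dist V E r z2" using resR z(4) by blast
          show False using decomp[OF r(1) z(1)] decomp[OF r(1) z(2)] z(3) r(2) by simp
        qed
        then show False using path_of[OF CK] np by blast
      qed
    qed
    have key: "\<exists>r\<in>R - {v}. dist V E r x \<noteq> dist V E r y"
      if xV: "x \<in> V" and yV: "y \<in> V" and lt: "dist V E v x < dist V E v y" for x y
    proof -
      have yv: "y \<noteq> v" using lt dist_self[OF vV] by auto
      obtain r' where r': "r' \<in> R - {v}" "r' \<notin> comp y" using cover yV yv by blast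
      have r'V: "r' \<in> V - {v}" using r' RV by blast
      have r'C: "r' \<in> comp r'" and C'K: "comp r' \<in> K" using comp_of[OF r'V] by auto
      have "y \<notin> comp r'"
      proof
        assume "y \<in> comp r'"
        moreover have "y \<in> comp y" "comp y \<in> K" using comp_of yV yv by auto
        ultimately have "comp r' = comp y" using comp_disj C'K by blast
        then show False using r' r'C by simp
      qed
      then have "dist V E r' y = dist V E r' v + dist V E v y" using sep[OF C'K r'C yV] by simp
      moreover have "dist V E r' x \<le> dist V E r' v + dist V E v x" using dist_tri r'V vV xV by blast
      ultimately show ?thesis using lt r' by fastforce
    qed
    have "resolving_set V E (R - {v})"
      unfolding resolving_set_def
    proof (intro conjI ballI impI)
      show "R - {v} \<subseteq> V" using RV by blast
    next
      fix x y assume xy: "x \<in> V" "y \<in> V" "x \<noteq> y"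
      obtain r where r: "r \<in> R" "dist V E r x \<noteq> dist V E r y" using resR xy by blast
      show "\<exists>r\<in>R - {v}. dist V E r x \<noteq> dist V E r y"
      proof (cases "r = v")
        case False then show ?thesis using r by blast
      next
        case True
        then have "dist V E v x < dist V E v y \<or> dist V E v y < dist V E v x" using r(2) unfolding True by linarith
        then show ?thesis using key xy by (metis)
      qed
    qed
    then have "metric_dim V E \<le> card (R - {v})" unfolding metric_dim_def by (metis (mono_tags) Least_le)
    moreover have "card (R - {v}) < card R" using vR RV fin finite_subset
      by (metis card_Diff1_less)
    ultimately show False using cardR by simp
  qed
  then show ?thesis unfolding void_vertex_def using vV by blast
qed

end
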